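(* Let $\Gamma$ be a totally ordered additive abelian group, let $\mathsf{M}=(E,\nu_{\mathsf{M}})$ be a valuated matroid of rank $r$ on a finite set $E$ with values in $\overline{\Gamma}$, and let $\widetilde{\nu}_{\mathsf{M}}\colon\binom{E}{\leq r}\to\overline{\Gamma}$ be given by $\widetilde{\nu}_{\mathsf{M}}(S)=\min\{\nu_{\mathsf{M}}(B)\mid B\in\binom{E}{r},\ S\subseteq B\}$. Let $Q$ be a finite set disjoint from $E$ and $\widetilde{E}=Q\sqcup E$. Define $\nu_{\widetilde{\mathsf{M}}}\colon\binom{\widetilde{E}}{r}\to\overline{\Gamma}$ by $\nu_{\widetilde{\mathsf{M}}}(\widetilde{S})=\widetilde{\nu}_{\mathsf{M}}(\widetilde{S}\cap E)$. Then $\nu_{\widetilde{\mathsf{M}}}$ is a valuated matroid of rank $r$ on $\widetilde{E}$.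
   Context: $\overline{\Gamma}=\Gamma\sqcup\{\infty\}$ with $\infty$ larger than every element of $\Gamma$. $\binom{X}{r}$ and $\binom{X}{\leq r}$ denote the sets of subsets of $X$ with exactly $r$, resp. at most $r$, elements. A valuated matroid of rank $r$ on a finite set $X$ is a map $\nu\colon\binom{X}{r}\to\overline{\Gamma}$, not identically $\infty$, such that for all $S,T\in\binom{X}{r}$ and every $s\in S- T$ there is $t\in T- S$ with $\nu(S)+\nu(T)\geq\nu(S-\{s\}\cup\{t\})+\nu(T-\{t\}\cup\{s\})$. *)

theory Defs
  imports Main
begin

datatype 'a ext = Fin 'a | Infty

instantiation ext :: (linorder) linorder
begin
fun less_eq_ext :: "'a ext \<Rightarrow> 'a ext \<Rightarrow> bool" where
  "less_eq_ext (Fin x) (Fin y) = (x \<le> y)"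
| "less_eq_ext _ Infty = True"
| "less_eq_ext Infty (Fin _) = False"
definition less_ext :: "'a ext \<Rightarrow> 'a ext \<Rightarrow> bool" where
  "less_ext x y = (x \<le> y \<and> \<not> y \<le> x)"
instance
proof
  fix x y z :: "'a ext"
  show "(x < y) = (x \<le> y \<and> \<not> y \<le> x)" by (simp add: less_ext_def)
  show "x \<le> x" by (cases x) auto
  show "x \<le> y \<Longrightarrow> y \<le> z \<Longrightarrow> x \<le> z"
    by (cases x; cases y; cases z) auto
  show "x \<le> y \<Longrightarrow> y \<le> x \<Longrightarrow> x = y"
    by (cases x; cases y) auto
  show "x \<le> y \<or> y \<le> x" by (cases x; cases y) auto
qed
end

fun eplus :: "'a::plus ext \<Rightarrow> 'a ext \<Rightarrow> 'a ext" where
  "eplus (Fin x) (Fin y) = Fin (x + y)"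
| "eplus _ _ = Infty"

text \<open>Valuated matroid of rank r on the finite set X; the map \<open>\<nu>\<close> is only
  consulted on r-element subsets of X.\<close>
definition valuated_matroid ::
  "'e set \<Rightarrow> nat \<Rightarrow> ('e set \<Rightarrow> 'a::linordered_ab_group_add ext) \<Rightarrow> bool" where
  "valuated_matroid X r \<nu> \<longleftrightarrow>
     finite X \<and>
     (\<exists>B. B \<subseteq> X \<and> card B = r \<and> \<nu> B \<noteq> Infty) \<and>
     (\<forall>S T. S \<subseteq> X \<and> card S = r \<and> T \<subseteq> X \<and> card T = r \<longrightarrow>
        (\<forall>s \<in> S - T. \<exists>t \<in> T - S.
           eplus (\<nu> (insert t (S - {s}))) (\<nu> (insert s (T - {t}))) \<le> eplus (\<nu> S) (\<nu> T)))"

definition nu_tilde ::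
  "'e set \<Rightarrow> nat \<Rightarrow> ('e set \<Rightarrow> 'a::linorder ext) \<Rightarrow> 'e set \<Rightarrow> 'a ext" where
  "nu_tilde E r \<nu> S = Min {\<nu> B | B. B \<subseteq> E \<and> card B = r \<and> S \<subseteq> B}"

end

theory Submission
  imports Defs
begin

lemma eplus_mono:
  fixes a :: "'a::linordered_ab_group_add ext"
  assumes "a \<le> a'" "b \<le> b'" shows "eplus a b \<le> eplus a' b'"
  using assms by (cases a; cases a'; cases b; cases b') (auto intro: add_mono)

lemma extend_exists:
  assumes "finite E" "X \<subseteq> E" "card X \<le> r" "r \<le> card E"
  shows "\<exists>B. B \<subseteq> E \<and> card B = r \<and> X \<subseteq> B"
proof -
  have fX: "finite X" using assms finite_subset by blast
  have "r - card X \<le> card (E - X)" using assms fX by (simp add: card_Diff_subset)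
  then obtain W where W: "W \<subseteq> E - X" "card W = r - card X" "finite W"
    by (rule obtain_subset_with_card_n)
  have "card (X \<union> W) = card X + card W" using W fX by (intro card_Un_disjoint) auto
  then show ?thesis using W assms by (intro exI[of _ "X \<union> W"]) auto
qed

lemma nt_set_finite:
  assumes "finite E"
  shows "finite {\<nu> B | B. B \<subseteq> E \<and> card B = r \<and> S \<subseteq> B}"
proof -
  have "{\<nu> B | B. B \<subseteq> E \<and> card B = r \<and> S \<subseteq> B} \<subseteq> \<nu> ` Pow E" by auto
  then show ?thesis using assms finite_subset by blast
qed

lemma nt_le:
  assumes "finite E" "B \<subseteq> E" "card B = r" "X \<subseteq> B"
  shows "nu_tilde E r \<nu> X \<le> \<nu> B"
  unfolding nu_tilde_def using assms by (intro Min_le nt_set_finite) auto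

lemma nt_attained:
  assumes "finite E" "X \<subseteq> E" "card X \<le> r" "r \<le> card E"
  shows "\<exists>B. B \<subseteq> E \<and> card B = r \<and> X \<subseteq> B \<and> \<nu> B = nu_tilde E r \<nu> X"
proof -
  obtain B where "B \<subseteq> E \<and> card B = r \<and> X \<subseteq> B" using extend_exists[OF assms] by blast
  then have ne: "{\<nu> B | B. B \<subseteq> E \<and> card B = r \<and> X \<subseteq> B} \<noteq> {}" by auto
  have "nu_tilde E r \<nu> X \<in> {\<nu> B | B. B \<subseteq> E \<and> card B = r \<and> X \<subseteq> B}"
    unfolding nu_tilde_def using ne nt_set_finite[OF assms(1)] by (rule Min_in[rotated])
  then show ?thesis by auto
qed

lemma nt_base:
  assumes "finite E" "B \<subseteq> E" "card B = r"
  shows "nu_tilde E r \<nu> B = \<nu> B"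
proof -
  have "{\<nu> C | C. C \<subseteq> E \<and> card C = r \<and> B \<subseteq> C} = {\<nu> B}"
  proof -
    have "C = B" if "C \<subseteq> E" "card C = r" "B \<subseteq> C" for C
      using that assms by (metis card_subset_eq finite_subset)
    then show ?thesis using assms by auto
  qed
  then show ?thesis unfolding nu_tilde_def by simp
qed

lemma card_swap:
  assumes "finite B" "b \<in> B" "c \<notin> B"
  shows "card (insert c (B - {b})) = card B"
proof -
  have "card B > 0" using assms card_gt_0_iff by blast
  then show ?thesis using assms by simp
qed

lemma vm_exch:
  assumes "valuated_matroid E r \<nu>" "B \<subseteq> E" "card B = r" "C \<subseteq> E" "card C = r" "b \<in> B - C"
  shows "\<exists>c\<in>C - B. eplus (\<nu> (insert c (B - {b}))) (\<nu> (insert b (C - {c}))) \<le> eplus (\<nu> B) (\<nu> C)"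
  using assms unfolding valuated_matroid_def by blast

lemma eplus_cancel:
  fixes a :: "'a::linordered_ab_group_add ext"
  assumes "a \<le> a'" "b \<le> b'" "eplus a' b' \<le> eplus a b"
  shows "eplus a b' \<le> eplus a b"
proof (cases a; cases a'; cases b; cases b')
  fix x y u v :: 'a
  assume h: "a = Fin x" "a' = Fin y" "b = Fin u" "b' = Fin v"
  have "x + v \<le> y + v" using assms(1) h by simp
  also have "\<dots> \<le> x + u" using assms(3) h by (simp add: add.commute)
  finally show ?thesis using h by simp
qed (use assms in auto)

lemma succ:
  fixes \<nu> :: "'e set \<Rightarrow> 'a::linordered_ab_group_add ext"
  assumes "finite E" "t \<in> Tx - Sx" "B' \<subseteq> E" "card B' = r" "C' \<subseteq> E" "card C' = r"
    "insert t (Sx - {s}) \<inter> E \<subseteq> B'" "insert s (Tx - {t}) \<inter> E \<subseteq> C'"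
    "eplus (\<nu> B') (\<nu> C') \<le> R"
  shows "\<exists>t\<in>Tx - Sx. eplus (nu_tilde E r \<nu> (insert t (Sx - {s}) \<inter> E))
            (nu_tilde E r \<nu> (insert s (Tx - {t}) \<inter> E)) \<le> R"
  using assms(2) order_trans[OF eplus_mono[OF nt_le[where \<nu>=\<nu>, OF assms(1,3,4,7)] nt_le[where \<nu>=\<nu>, OF assms(1,5,6,8)]] assms(9)]
  by blast

lemma vm_cong:
  assumes vm: "valuated_matroid X r f" and eq: "\<And>S. S \<subseteq> X \<Longrightarrow> card S = r \<Longrightarrow> f S = g S"
  shows "valuated_matroid X r g"
proof -
  have fin: "finite X" using vm unfolding valuated_matroid_def by blast
  have sw: "insert t (S - {s}) \<subseteq> X \<and> card (insert t (S - {s})) = r"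
    if "S \<subseteq> X" "card S = r" "s \<in> S" "t \<in> X" "t \<notin> S" for S s t
    using that card_swap[of S s t] finite_subset[OF _ fin] by auto
  show ?thesis
    unfolding valuated_matroid_def
  proof (intro conjI allI impI ballI)
    show "finite X" by (rule fin)
    obtain B where "B \<subseteq> X" "card B = r" "f B \<noteq> Infty" using vm unfolding valuated_matroid_def by blast
    then show "\<exists>B\<subseteq>X. card B = r \<and> g B \<noteq> Infty" using eq by metis
  next
    fix S T s assume H: "S \<subseteq> X \<and> card S = r \<and> T \<subseteq> X \<and> card T = r" and s: "s \<in> S - T"
    then obtain t where t: "t \<in> T - S"
      "eplus (f (insert t (S - {s}))) (f (insert s (T - {t}))) \<le> eplus (f S) (f T)"
      using vm unfolding valuated_matroid_def by blast
    have "f (insert t (S - {s})) = g (insert t (S - {s}))" using sw[of S s t] H s t eq by auto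
    moreover have "f (insert s (T - {t})) = g (insert s (T - {t}))" using sw[of T t s] H s t eq by auto
    moreover have "f S = g S" "f T = g T" using H eq by auto
    ultimately show "\<exists>t\<in>T - S. eplus (g (insert t (S - {s}))) (g (insert s (T - {t}))) \<le> eplus (g S) (g T)"
      using t by metis
  qed
qed

lemma compose:
  fixes \<nu> :: "'e set \<Rightarrow> 'a::linordered_ab_group_add ext"
  assumes fin: "finite E" "finite Q" and dis: "Q \<inter> E = {}" and rE: "r \<le> card E"
    and Y: "Y \<subseteq> Q \<union> E" "card Y \<le> r"
  shows "nu_tilde (Q \<union> E) r (\<lambda>S. nu_tilde E r \<nu> (S \<inter> E)) Y = nu_tilde E r \<nu> (Y \<inter> E)"
proof (rule antisym)
  define Z where "Z = Y \<inter> E"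
  have fY: "finite Y" using Y fin finite_subset by blast
  have cZ: "card Z \<le> card Y" unfolding Z_def using fY by (intro card_mono) auto
  obtain B where B: "B \<subseteq> E" "card B = r" "Z \<subseteq> B" "\<nu> B = nu_tilde E r \<nu> Z"
    using nt_attained[OF fin(1), of Z r \<nu>] cZ Y rE unfolding Z_def by auto
  have fZ: "finite Z" using fY Z_def by simp
  have "card (B - Z) = r - card Z" using B fZ by (simp add: card_Diff_subset)
  then have "r - card Y \<le> card (B - Z)" using cZ by simp
  then obtain W where W: "W \<subseteq> B - Z" "card W = r - card Y" "finite W"
    by (rule obtain_subset_with_card_n)
  have disj: "Y \<inter> W = {}" using W B unfolding Z_def by auto
  have cB': "card (Y \<union> W) = r" using card_Un_disjoint[OF fY W(3) disj] W Y by simp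
  have sub: "Y \<union> W \<subseteq> Q \<union> E" using W B Y by auto
  have "(Y \<union> W) \<inter> E \<subseteq> B" using W B unfolding Z_def by auto
  then have "nu_tilde E r \<nu> ((Y \<union> W) \<inter> E) \<le> \<nu> B" using nt_le[OF fin(1) B(1,2)] by blast
  moreover have "nu_tilde (Q \<union> E) r (\<lambda>S. nu_tilde E r \<nu> (S \<inter> E)) Y \<le> nu_tilde E r \<nu> ((Y \<union> W) \<inter> E)"
    using nt_le[of "Q \<union> E" "Y \<union> W" r Y "\<lambda>S. nu_tilde E r \<nu> (S \<inter> E)"] fin sub cB' by auto
  ultimately show "nu_tilde (Q \<union> E) r (\<lambda>S. nu_tilde E r \<nu> (S \<inter> E)) Y \<le> nu_tilde E r \<nu> (Y \<inter> E)"
    using B Z_def by auto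
next
  have rQE: "r \<le> card (Q \<union> E)" using rE fin by (meson card_mono finite_UnI le_trans sup_ge2)
  obtain B where B: "B \<subseteq> Q \<union> E" "card B = r" "Y \<subseteq> B"
    "nu_tilde E r \<nu> (B \<inter> E) = nu_tilde (Q \<union> E) r (\<lambda>S. nu_tilde E r \<nu> (S \<inter> E)) Y"
    using nt_attained[of "Q \<union> E" Y r "\<lambda>S. nu_tilde E r \<nu> (S \<inter> E)"] fin Y rQE by auto
  have fB: "finite B" using B fin finite_subset by blast
  have "card (B \<inter> E) \<le> r" using B fB by (metis card_mono inf_le1)
  then obtain B3 where B3: "B3 \<subseteq> E" "card B3 = r" "B \<inter> E \<subseteq> B3" "\<nu> B3 = nu_tilde E r \<nu> (B \<inter> E)"
    using nt_attained[OF fin(1), of "B \<inter> E" r \<nu>] rE by auto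
  have "nu_tilde E r \<nu> (Y \<inter> E) \<le> \<nu> B3" using B B3 by (intro nt_le[OF fin(1)]) auto
  then show "nu_tilde E r \<nu> (Y \<inter> E) \<le> nu_tilde (Q \<union> E) r (\<lambda>S. nu_tilde E r \<nu> (S \<inter> E)) Y"
    using B B3 by simp
qed

lemma ext1:
  fixes \<nu> :: "'e set \<Rightarrow> 'a::linordered_ab_group_add ext"
  assumes vm: "valuated_matroid E r \<nu>" and q: "q \<notin> E"
  shows "valuated_matroid (insert q E) r (\<lambda>S. nu_tilde E r \<nu> (S \<inter> E))"
proof -
  have fin: "finite E" using vm unfolding valuated_matroid_def by blast
  obtain B0 where B0: "B0 \<subseteq> E" "card B0 = r" "\<nu> B0 \<noteq> Infty" using vm unfolding valuated_matroid_def by blast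
  have rE: "r \<le> card E" using B0 fin card_mono by blast
  have swp: "insert c (B - {b}) \<subseteq> E \<and> card (insert c (B - {b})) = r"
    if "B \<subseteq> E" "card B = r" "b \<in> B" "c \<in> E" "c \<notin> B" for B b c
    using that card_swap[of B b c] finite_subset[OF _ fin] by auto
  have exch: "\<exists>t\<in>Tx - Sx. eplus (nu_tilde E r \<nu> (insert t (Sx - {s}) \<inter> E))
            (nu_tilde E r \<nu> (insert s (Tx - {t}) \<inter> E)) \<le> eplus (nu_tilde E r \<nu> (Sx \<inter> E)) (nu_tilde E r \<nu> (Tx \<inter> E))"
    if H: "Sx \<subseteq> insert q E" "card Sx = r" "Tx \<subseteq> insert q E" "card Tx = r" and s: "s \<in> Sx - Tx" for Sx Tx s
  proof -
    define S where "S = Sx \<inter> E"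
    define T where "T = Tx \<inter> E"
    have fSx: "finite Sx" "finite Tx" using H fin finite_subset by (metis finite_insert)+
    have cS: "card S \<le> r" unfolding S_def using H fSx by (metis card_mono inf_le1)
    have cT: "card T \<le> r" unfolding T_def using H fSx by (metis card_mono inf_le1)
    obtain B where B: "B \<subseteq> E" "card B = r" "S \<subseteq> B" "\<nu> B = nu_tilde E r \<nu> S"
      using nt_attained[OF fin _ cS rE, of \<nu>] S_def by auto
    obtain C where C: "C \<subseteq> E" "card C = r" "T \<subseteq> C" "\<nu> C = nu_tilde E r \<nu> T"
      using nt_attained[OF fin _ cT rE, of \<nu>] T_def by auto
    have fB: "finite B" "finite C" using B C fin finite_subset by auto
    have R: "eplus (nu_tilde E r \<nu> (Sx \<inter> E)) (nu_tilde E r \<nu> (Tx \<inter> E)) = eplus (\<nu> B) (\<nu> C)"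
      using B C S_def T_def by simp
    note SUCC = succ[OF fin, where R = "eplus (\<nu> B) (\<nu> C)" and \<nu> = \<nu> and r = r and Sx = Sx and Tx = Tx and s = s]
    have key: "\<exists>t\<in>Tx - Sx. eplus (nu_tilde E r \<nu> (insert t (Sx - {s}) \<inter> E))
            (nu_tilde E r \<nu> (insert s (Tx - {t}) \<inter> E)) \<le> eplus (\<nu> B) (\<nu> C)"
    proof (cases "s = q")
      case sq0: True
      have qT: "q \<notin> Tx" using s sq0 by auto
      have TT: "T = Tx" using qT H unfolding T_def by auto
      have CT: "C = Tx" using card_subset_eq[OF fB(2) C(3)] C(2) H(4) TT by simp
      have SS: "S = Sx - {q}" using H q unfolding S_def by auto
      have qS: "q \<in> Sx" using s sq0 by auto
      have cS1: "card S = r - 1" using SS qS H(2) fSx by simp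
      have r1: "r \<ge> 1" using qS H(2) fSx by (metis One_nat_def Suc_leI card_gt_0_iff empty_iff)
      have "card (B - S) = 1" using B cS1 r1 fB by (simp add: card_Diff_subset finite_subset)
      then obtain e where e: "B - S = {e}" by (rule card_1_singletonE)
      have eB: "e \<in> B" "e \<notin> S" "e \<in> E" using e B by auto
      show ?thesis
      proof (cases "e \<in> Tx")
        case True
        show ?thesis
          by (rule SUCC[of e B C]) (use True eB B C CT SS e S_def sq0 q in auto)
      next
        case False
        then have "e \<in> B - C" using eB CT by auto
        then obtain c where c: "c \<in> C - B"
          "eplus (\<nu> (insert c (B - {e}))) (\<nu> (insert e (C - {c}))) \<le> eplus (\<nu> B) (\<nu> C)"
          using vm_exch[OF vm B(1,2) C(1,2)] by blast
        show ?thesis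
          by (rule SUCC[of c "insert c (B - {e})" "insert e (C - {c})"])
            (use False c eB B C CT SS e S_def sq0 q swp[of B e c] swp[of C c e] in auto)
      qed
    next
      case sq: False
      have sE: "s \<in> E" using s sq H by auto
      show ?thesis
      proof (cases "q \<in> Sx")
        case qnS: False
        have SS: "S = Sx" using qnS H unfolding S_def by auto
        have BS: "B = Sx" using card_subset_eq[OF fB(1) B(3)] B(2) H(2) SS by simp
        show ?thesis
        proof (cases "q \<in> Tx")
          case False
          have TT: "T = Tx" using False H unfolding T_def by auto
          have CT: "C = Tx" using card_subset_eq[OF fB(2) C(3)] C(2) H(4) TT by simp
          obtain c where c: "c \<in> C - B"
            "eplus (\<nu> (insert c (B - {s}))) (\<nu> (insert s (C - {c}))) \<le> eplus (\<nu> B) (\<nu> C)"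
            using vm_exch[OF vm B(1,2) C(1,2), of s] s BS CT by blast
          show ?thesis
            by (rule SUCC[of c "insert c (B - {s})" "insert s (C - {c})"])
              (use c s sE B C CT BS swp[of B s c] swp[of C c s] in auto)
        next
          case qT: True
          show ?thesis
          proof (cases "s \<in> C")
            case True
            show ?thesis
              by (rule SUCC[of q B C]) (use True qT qnS B C T_def BS q in auto)
          next
            case sC0: False
            obtain c where c: "c \<in> C - B"
              "eplus (\<nu> (insert c (B - {s}))) (\<nu> (insert s (C - {c}))) \<le> eplus (\<nu> B) (\<nu> C)"
              using vm_exch[OF vm B(1,2) C(1,2), of s] s BS sC0 by blast
            show ?thesis
            proof (cases "c \<in> Tx")
              case True
              show ?thesis
                by (rule SUCC[of c "insert c (B - {s})" "insert s (C - {c})"])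
                  (use True sC0 c s sE B C BS swp[of B s c] swp[of C c s] T_def in auto)
            next
              case False
              show ?thesis
                by (rule SUCC[of q "insert c (B - {s})" "insert s (C - {c})"])
                  (use False sC0 qT qnS c s sE B C BS swp[of B s c] swp[of C c s] T_def q in auto)
            qed
          qed
        qed
      next
        case qS: True
        have SS: "S = Sx - {q}" using H q unfolding S_def by auto
        have cS1: "card S = r - 1" using SS qS H(2) fSx by simp
        have r1: "r \<ge> 1" using qS H(2) fSx by (metis One_nat_def Suc_leI card_gt_0_iff empty_iff)
        have "card (B - S) = 1" using B cS1 r1 fB by (simp add: card_Diff_subset finite_subset)
        then obtain e where e: "B - S = {e}" by (rule card_1_singletonE)
        have eB: "e \<in> B" "e \<notin> S" "e \<in> E" "e \<noteq> s" using e B sE s SS sq by auto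
        have "Tx - {q} \<subseteq> T" using H unfolding T_def by auto
        then have "card (Tx - {q}) \<le> card T" using fSx by (intro card_mono) (auto simp: T_def)
        then have "r - 1 \<le> card T" using H(4) fSx by (simp add: card_Diff_singleton_if split: if_splits)
        then have "card (C - T) \<le> Suc 0" using C fB by (simp add: card_Diff_subset finite_subset)
        then have CT1: "\<And>x y. x \<in> C - T \<Longrightarrow> y \<in> C - T \<Longrightarrow> x = y"
          using card_le_Suc0_iff_eq[of "C - T"] fB by auto
        have sS: "s \<in> S" using s sE S_def by auto
        have sT: "s \<notin> T" using s T_def by auto
        show ?thesis
        proof (cases "s \<in> C")
          case sC: True
          show ?thesis
          proof (cases "e \<in> Tx")
            case True
            show ?thesis
              by (rule SUCC[of e B C]) (use True eB e B C sC S_def T_def in auto)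
          next
            case False
            have "e \<notin> C"
            proof
              assume "e \<in> C"
              then have "e = s" using CT1[of e s] False eB sC sT T_def by auto
              then show False using eB by simp
            qed
            then have "e \<in> B - C" using eB by auto
            then obtain c where c: "c \<in> C - B"
              "eplus (\<nu> (insert c (B - {e}))) (\<nu> (insert e (C - {c}))) \<le> eplus (\<nu> B) (\<nu> C)"
              using vm_exch[OF vm B(1,2) C(1,2)] by blast
            have cT: "c \<in> T"
            proof (rule ccontr)
              assume "c \<notin> T"
              then have "c = s" using CT1[of c s] c sC sT by auto
              then show False using c sS B by auto
            qed
            show ?thesis
              by (rule SUCC[of c "insert c (B - {e})" "insert e (C - {c})"])
                (use \<open>e \<notin> C\<close> cT c eB e B C sC sS S_def T_def swp[of B e c] swp[of C c e] in auto)
          qed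
        next
          case sC: False
          obtain c where c: "c \<in> C - B"
            "eplus (\<nu> (insert c (B - {s}))) (\<nu> (insert s (C - {c}))) \<le> eplus (\<nu> B) (\<nu> C)"
            using vm_exch[OF vm B(1,2) C(1,2), of s] sS B sC by blast
          show ?thesis
          proof (cases "c \<in> Tx")
            case True
            show ?thesis
              by (rule SUCC[of c "insert c (B - {s})" "insert s (C - {c})"])
                (use True sC c sS sE B C S_def T_def swp[of B s c] swp[of C c s] in auto)
          next
            case cnT: False
            define B1 where "B1 = insert c (B - {s})"
            define C1 where "C1 = insert s (C - {c})"
            have B1: "B1 \<subseteq> E" "card B1 = r" using swp[of B s c] B C c sS B1_def by auto
            have C1: "C1 \<subseteq> E" "card C1 = r" using swp[of C c s] C c sC sE C1_def by auto
            have i1: "eplus (\<nu> B1) (\<nu> C1) \<le> eplus (\<nu> B) (\<nu> C)" using c B1_def C1_def by simp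
            have cCT: "c \<in> C - T" using c cnT T_def by auto
            show ?thesis
            proof (cases "e \<in> Tx")
              case True
              show ?thesis
                by (rule SUCC[of e B1 C1]) (use True eB e B C c cnT S_def T_def B1 C1 i1 B1_def C1_def in auto)
            next
              case enT: False
              have "e \<notin> C1"
              proof
                assume "e \<in> C1"
                then have "e \<in> C - T" using eB C1_def enT T_def by auto
                then have "e = c" using CT1 cCT by blast
                then show False using c eB by auto
              qed
              then have "e \<in> B1 - C1" using eB B1_def by auto
              then obtain c' where c': "c' \<in> C1 - B1"
                "eplus (\<nu> (insert c' (B1 - {e}))) (\<nu> (insert e (C1 - {c'}))) \<le> eplus (\<nu> B1) (\<nu> C1)"
                using vm_exch[OF vm B1 C1] by blast
              show ?thesis
              proof (cases "c' \<in> Tx")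
                case True
                have i12: "eplus (\<nu> (insert c' (B1 - {e}))) (\<nu> (insert e (C1 - {c'}))) \<le> eplus (\<nu> B) (\<nu> C)"
                  using order_trans[OF c'(2) i1] .
                have c'S: "c' \<notin> Sx" using c' True s B SS B1_def C1 q by auto
                have eB1: "e \<in> B1" "e \<notin> C1" using \<open>e \<in> B1 - C1\<close> by auto
                have c'E: "c' \<in> E" "c' \<notin> B1" "c' \<in> C1" using c' C1 by auto
                have sw1: "insert c' (B1 - {e}) \<subseteq> E \<and> card (insert c' (B1 - {e})) = r"
                  using swp[OF B1 eB1(1) c'E(1,2)] .
                have sw2: "insert e (C1 - {c'}) \<subseteq> E \<and> card (insert e (C1 - {c'})) = r"
                  using swp[OF C1 c'E(3) eB(3) eB1(2)] .
                have inc1: "insert c' (Sx - {s}) \<inter> E \<subseteq> insert c' (B1 - {e})"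
                proof
                  fix x assume x: "x \<in> insert c' (Sx - {s}) \<inter> E"
                  show "x \<in> insert c' (B1 - {e})"
                  proof (cases "x = c'")
                    case False
                    then have "x \<in> S" "x \<noteq> s" using x S_def by auto
                    then show ?thesis using B(3) B1_def eB(2) by auto
                  qed simp
                qed
                have inc2: "insert s (Tx - {c'}) \<inter> E \<subseteq> insert e (C1 - {c'})"
                proof
                  fix x assume x: "x \<in> insert s (Tx - {c'}) \<inter> E"
                  show "x \<in> insert e (C1 - {c'})"
                  proof (cases "x = s")
                    case True
                    then show ?thesis using C1_def s \<open>c' \<in> Tx\<close> by auto
                  next
                    case False
                    then have "x \<in> T" "x \<noteq> c'" using x T_def by auto
                    then show ?thesis using C(3) C1_def cnT T_def by auto
                  qed
                qed
                show ?thesis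
                  using SUCC[of c' "insert c' (B1 - {e})" "insert e (C1 - {c'})"] True c'S sw1 sw2 inc1 inc2 i12
                  by blast
              next
                case False
                have c's: "c' = s"
                proof (rule ccontr)
                  assume "c' \<noteq> s"
                  then have "c' \<in> C - T" using c' False C1_def T_def by auto
                  then have "c' = c" using CT1 cCT by blast
                  then show False using c' B1_def by auto
                qed
                define B2 where "B2 = insert s (B1 - {e})"
                define C2 where "C2 = insert e (C1 - {s})"
                have B2: "B2 \<subseteq> E" "card B2 = r" using swp[of B1 e s] B1 \<open>e \<in> B1 - C1\<close> sE c' c's B2_def by auto
                have C2: "C2 \<subseteq> E" "card C2 = r" using swp[of C1 s e] C1 eB \<open>e \<in> B1 - C1\<close> C1_def C2_def sE by auto
                have i2: "eplus (\<nu> B2) (\<nu> C2) \<le> eplus (\<nu> B) (\<nu> C)"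
                  using order_trans[OF c'(2) i1] c's B2_def C2_def by simp
                have SB2: "S \<subseteq> B2" using B eB e B2_def B1_def by auto
                have TC2: "T \<subseteq> C2" using C cnT T_def C2_def C1_def s by auto
                have l1: "\<nu> B \<le> \<nu> B2" using B nt_le[OF fin B2 SB2] by simp
                have l2: "\<nu> C \<le> \<nu> C2" using C nt_le[OF fin C2 TC2] by simp
                have i3: "eplus (\<nu> B) (\<nu> C2) \<le> eplus (\<nu> B) (\<nu> C)"
                  by (rule eplus_cancel[OF l1 l2 i2])
                have "s \<in> B - C2" using sS B C2_def C1_def eB by auto
                then obtain d where d: "d \<in> C2 - B"
                  "eplus (\<nu> (insert d (B - {s}))) (\<nu> (insert s (C2 - {d}))) \<le> eplus (\<nu> B) (\<nu> C2)"
                  using vm_exch[OF vm B(1,2) C2] by blast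
                have dT: "d \<in> T"
                proof (rule ccontr)
                  assume "d \<notin> T"
                  then have "d \<in> C - T" using d eB C2_def C1_def by auto
                  then have "d = c" using CT1 cCT by blast
                  then show False using d C2_def C1_def c eB sS B by auto
                qed
                have i4: "eplus (\<nu> (insert d (B - {s}))) (\<nu> (insert s (C2 - {d}))) \<le> eplus (\<nu> B) (\<nu> C)"
                  using order_trans[OF d(2) i3] .
                show ?thesis
                  by (rule SUCC[of d "insert d (B - {s})" "insert s (C2 - {d})"])
                    (use \<open>s \<in> B - C2\<close> dT d sS sE B C2 TC2 S_def T_def i4 swp[of B s d] swp[of C2 d s] in auto)
              qed
            qed
          qed
        qed
      qed
    qed
    then show ?thesis using R by simp
  qed
  show ?thesis
    unfolding valuated_matroid_def
  proof (intro conjI allI impI ballI)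
    show "finite (insert q E)" using fin by simp
    show "\<exists>B\<subseteq>insert q E. card B = r \<and> nu_tilde E r \<nu> (B \<inter> E) \<noteq> Infty"
      using B0 nt_base[OF fin B0(1,2), of \<nu>] by (intro exI[of _ B0]) (auto simp: Int_absorb2)
  next
    fix S T s assume "S \<subseteq> insert q E \<and> card S = r \<and> T \<subseteq> insert q E \<and> card T = r" "s \<in> S - T"
    then show "\<exists>t\<in>T - S. eplus (nu_tilde E r \<nu> (insert t (S - {s}) \<inter> E))
            (nu_tilde E r \<nu> (insert s (T - {t}) \<inter> E)) \<le> eplus (nu_tilde E r \<nu> (S \<inter> E)) (nu_tilde E r \<nu> (T \<inter> E))"
      using exch by blast
  qed
qed

theorem proposition1p1:
  fixes E Q :: "'e set" and r :: nat
    and \<nu> :: "'e set \<Rightarrow> 'a::linordered_ab_group_add ext"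
  assumes "valuated_matroid E r \<nu>"
    and "finite Q" and "Q \<inter> E = {}"
  shows "valuated_matroid (Q \<union> E) r (\<lambda>S. nu_tilde E r \<nu> (S \<inter> E))"
proof -
  have fin: "finite E" using assms(1) unfolding valuated_matroid_def by blast
  obtain B0 where "B0 \<subseteq> E" "card B0 = r" using assms(1) unfolding valuated_matroid_def by blast
  then have rE: "r \<le> card E" using fin card_mono by blast
  have "Q \<inter> E = {} \<longrightarrow> valuated_matroid (Q \<union> E) r (\<lambda>S. nu_tilde E r \<nu> (S \<inter> E))"
    using assms(2)
  proof (induction Q rule: finite_induct)
    case empty
    show ?case
    proof
      show "valuated_matroid ({} \<union> E) r (\<lambda>S. nu_tilde E r \<nu> (S \<inter> E))"
      proof -
        have "valuated_matroid E r (\<lambda>S. nu_tilde E r \<nu> (S \<inter> E))"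
          by (rule vm_cong[OF assms(1)]) (simp add: Int_absorb2 nt_base[OF fin])
        then show ?thesis by simp
      qed
    qed
  next
    case (insert q Q)
    show ?case
    proof
      assume d: "insert q Q \<inter> E = {}"
      then have IH: "valuated_matroid (Q \<union> E) r (\<lambda>S. nu_tilde E r \<nu> (S \<inter> E))" using insert by auto
      have qn: "q \<notin> Q \<union> E" using d insert by auto
      have X: "valuated_matroid (insert q (Q \<union> E)) r
          (\<lambda>S. nu_tilde (Q \<union> E) r (\<lambda>S. nu_tilde E r \<nu> (S \<inter> E)) (S \<inter> (Q \<union> E)))"
        by (rule ext1[OF IH qn])
      have "valuated_matroid (insert q (Q \<union> E)) r (\<lambda>S. nu_tilde E r \<nu> (S \<inter> E))"
      proof (rule vm_cong[OF X])
        fix S assume S: "S \<subseteq> insert q (Q \<union> E)" "card S = r"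
        have fS: "finite S" using S insert fin finite_subset by blast
        have "card (S \<inter> (Q \<union> E)) \<le> r" using S fS by (metis card_mono inf_le1)
        then have "nu_tilde (Q \<union> E) r (\<lambda>S. nu_tilde E r \<nu> (S \<inter> E)) (S \<inter> (Q \<union> E))
            = nu_tilde E r \<nu> (S \<inter> (Q \<union> E) \<inter> E)"
          using compose[OF fin insert(1) _ rE, of "S \<inter> (Q \<union> E)"] d by auto
        also have "S \<inter> (Q \<union> E) \<inter> E = S \<inter> E" by auto
        finally show "nu_tilde (Q \<union> E) r (\<lambda>S. nu_tilde E r \<nu> (S \<inter> E)) (S \<inter> (Q \<union> E))
            = nu_tilde E r \<nu> (S \<inter> E)" .
      qed
      then show "valuated_matroid (insert q Q \<union> E) r (\<lambda>S. nu_tilde E r \<nu> (S \<inter> E))" by simp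
    qed
  qed
  then show ?thesis using assms(3) by blast
qed

end
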